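(* The closed-loop SMP system $x_{t+1}=(A_t(\theta_t)-B_t(\theta_t)K)x_t$ is robustly mean-square stable if and only if its expanded system $\tilde x_{t+1}=\mathcal{C}(F(\tilde\theta_t,K))\tilde x_t$ is robustly stable.
   Context: Let $n,m,d_\theta$ be positive integers and $\mathbb{S}_\theta\subset\mathbb{R}^{d_\theta}$. Consider $x_{t+1}=A_t(\theta_t)x_t+B_t(\theta_t)u_t$, $t=0,1,2,\dots$, with $x_t\in\mathbb{R}^n$, $u_t\in\mathbb{R}^m$, deterministic $x_0$, uncertain $\theta_t\in\mathbb{S}_\theta$. The random vector $v_t(\theta_t):=\mathrm{vec}([A_t(\theta_t),B_t(\theta_t)])\in\mathbb{R}^{n(n+m)}$ has a Lebesgue-measurable conditional density $p(v_t\mid\theta_t)$, and for every $s\ge1$ the conditional density of $(v_0,\dots,v_s)$ given $(\theta_0,\theta_1,\dots)$ is $\prod_{t=0}^sp(v_t\mid\theta_t)$; $\mathrm{E}[\cdot|_{\theta_\bullet}]$ is conditional expectation given $(\theta_0,\theta_1,\dots)$. $\mathrm{vec}$ stacks columns; $\mathrm{vech}(X)$ stacks columnwise the entries on and below the diagonal. $\mathbb{P}_N:=\{\varphi\in\mathbb{R}^N:\varphi_k\ge0,\sum_k\varphi_k=1\}$. The system is SMP: there exist $N$, symmetric $M^{(1)},\dots,M^{(N)}\in\mathbb{R}^{n(n+m)\times n(n+m)}$, and $\phi:\mathbb{S}_\theta\to\mathbb{P}_N$ with $\mathrm{E}[v_tv_t^\top|_{\theta_\bullet}]=\sum_k[\phi(\theta_t)]_kM^{(k)}$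 for all $t$ and all sequences in $\mathbb{S}_\theta$. It is time-invariant (TI) if $\theta_t=\theta$ is constant in $t$ (then all parameter sequences below are constant), time-varying (TV) otherwise. For $K\in\mathbb{R}^{m\times n}$, the closed loop ($u_t=-Kx_t$) is $x_{t+1}=(A_t(\theta_t)-B_t(\theta_t)K)x_t$. It is robustly mean-square stable if for all $x_0\in\mathbb{R}^n$ and all $\theta_0,\theta_1,\dots\in\mathbb{S}_\theta$, $\lim_{t\to\infty}\mathrm{E}[\|x_t\|^2|_{\theta_\bullet}]=0$. Expanded system: $\tilde n=n(n+1)/2$; $E_e\in\mathbb{R}^{\tilde n\times n^2}$ with $E_e\mathrm{vec}(X)=\mathrm{vech}(X)$ for all $X\in\mathbb{R}^{n\times n}$; $D\in\mathbb{R}^{n^2\times\tilde n}$ with $D\mathrm{vech}(Y)=\mathrm{vec}(Y)$ for symmetric $Y$; $\mathcal{C}(Y):=E_eYD$. With blocks $M^{(k)}_{i,j}\in\mathbb{R}^{n\times n}$ ($i,j\le n+m$) of $M^{(k)}$, define $F^{(k)}_{aa},F^{(k)}_{ab},F^{(k)}_{ba},F^{(k)}_{bb}$ by: column $n(j-1)+i$ of $F^{(k)}_{aa}$ is $\mathrm{vec}(M^{(k)}_{i,j})$; column $m(j-1)+i'$ of $F^{(k)}_{ab}$ is $\mathrm{vec}(M^{(k)}_{n+i',j})$; column $n(j'-1)+i$ of $F^{(k)}_{ba}$ is $\mathrm{vec}(M^{(k)}_{i,n+j'})$; column $m(j'-1)+i'$ of $F^{(k)}_{bb}$ is $\mathrm{vec}(M^{(k)}_{n+i',n+j'})$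 ($i,j\le n$, $i',j'\le m$). $F^{(k)}(K):=F^{(k)}_{aa}-F^{(k)}_{ab}(I_n\otimes K)-F^{(k)}_{ba}(K\otimes I_n)+F^{(k)}_{bb}(K\otimes K)$, $F(\tilde\theta,K):=\sum_k[\tilde\theta]_kF^{(k)}(K)$. Expanded system: $\tilde x_{t+1}=\mathcal{C}(F(\tilde\theta_t,K))\tilde x_t$, $\tilde x_t\in\mathbb{R}^{\tilde n}$, $\tilde\theta_t\in\tilde{\mathbb{S}}:=\{\phi(\theta):\theta\in\mathbb{S}_\theta\}$; it is TI/TV when the SMP system is. It is robustly stable if for all $\tilde x_0\in\mathbb{R}^{\tilde n}$ and all $\tilde\theta_0,\tilde\theta_1,\dots\in\tilde{\mathbb{S}}$, $\lim_{t\to\infty}\|\tilde x_t\|=0$. *)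

theory Defs
  imports "HOL-Probability.Probability"
begin

text \<open>Conventions: all indices are 0-based. Vectors are functions nat => real, matrices are
functions nat => nat => real (row, column); dimensions are carried explicitly and only
entries within the stated bounds are ever used.\<close>

definition lebN :: "nat \<Rightarrow> (nat \<Rightarrow> real) measure" where
  "lebN N = completion (PiM {..<N} (\<lambda>_. lborel))"

definition sqnorm :: "nat \<Rightarrow> (nat \<Rightarrow> real) \<Rightarrow> real" where
  "sqnorm d x = (\<Sum>i<d. (x i)\<^sup>2)"

text \<open>v = vec([A,B]) (column stacking), [A,B] of size n x (n+m).\<close>
definition Amat :: "nat \<Rightarrow> (nat \<Rightarrow> real) \<Rightarrow> nat \<Rightarrow> nat \<Rightarrow> real" where
  "Amat n v i j = v (j * n + i)"

definition Bmat :: "nat \<Rightarrow> (nat \<Rightarrow> real) \<Rightarrow> nat \<Rightarrow> nat \<Rightarrow> real" where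
  "Bmat n v i j = v ((n + j) * n + i)"

definition cl_step :: "nat \<Rightarrow> nat \<Rightarrow> (nat \<Rightarrow> nat \<Rightarrow> real) \<Rightarrow> (nat \<Rightarrow> real) \<Rightarrow> (nat \<Rightarrow> real) \<Rightarrow> nat \<Rightarrow> real" where
  "cl_step n m K v x = (\<lambda>i. \<Sum>j<n. (Amat n v i j - (\<Sum>l<m. Bmat n v i l * K l j)) * x j)"

text \<open>State x_t as a function of the realisations w s = v_s (s < t).\<close>
primrec xtraj :: "nat \<Rightarrow> nat \<Rightarrow> (nat \<Rightarrow> nat \<Rightarrow> real) \<Rightarrow> (nat \<Rightarrow> real) \<Rightarrow> (nat \<Rightarrow> nat \<Rightarrow> real) \<Rightarrow> nat \<Rightarrow> nat \<Rightarrow> real" where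
  "xtraj n m K x0 w 0 = x0"
| "xtraj n m K x0 w (Suc t) = cl_step n m K (w t) (xtraj n m K x0 w t)"

text \<open>Conditional law of v_t given theta_t = th: density p th w.r.t. Lebesgue measure.\<close>
definition vlaw :: "nat \<Rightarrow> ('p \<Rightarrow> (nat \<Rightarrow> real) \<Rightarrow> real) \<Rightarrow> 'p \<Rightarrow> (nat \<Rightarrow> real) measure" where
  "vlaw N p th = density (lebN N) (\<lambda>v. ennreal (p th v))"

text \<open>Conditional joint law of (v_0,...,v_{t-1}) given the parameter sequence ths:
  density prod_{s<t} p(v_s | ths s) w.r.t. Lebesgue measure.\<close>
definition traj_law :: "nat \<Rightarrow> ('p \<Rightarrow> (nat \<Rightarrow> real) \<Rightarrow> real) \<Rightarrow> (nat \<Rightarrow> 'p) \<Rightarrow> nat \<Rightarrow> (nat \<Rightarrow> nat \<Rightarrow> real) measure" where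
  "traj_law N p ths t = density (PiM {..<t} (\<lambda>_. lebN N)) (\<lambda>w. ennreal (\<Prod>s<t. p (ths s) (w s)))"

text \<open>E[ ||x_t||^2 | theta_bullet ].\<close>
definition cond_sq_moment :: "nat \<Rightarrow> nat \<Rightarrow> (nat \<Rightarrow> nat \<Rightarrow> real) \<Rightarrow> ('p \<Rightarrow> (nat \<Rightarrow> real) \<Rightarrow> real)
    \<Rightarrow> (nat \<Rightarrow> 'p) \<Rightarrow> (nat \<Rightarrow> real) \<Rightarrow> nat \<Rightarrow> ennreal" where
  "cond_sq_moment n m K p ths x0 t =
     (\<integral>\<^sup>+ w. ennreal (sqnorm n (xtraj n m K x0 w t)) \<partial>traj_law (n * (n + m)) p ths t)"

text \<open>Admissible parameter sequences: values in S, constant if the system is time-invariant.\<close>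
definition adm :: "bool \<Rightarrow> 'a set \<Rightarrow> (nat \<Rightarrow> 'a) \<Rightarrow> bool" where
  "adm ti S s \<longleftrightarrow> (\<forall>t. s t \<in> S) \<and> (ti \<longrightarrow> (\<forall>t. s t = s 0))"

definition robust_ms_stable :: "nat \<Rightarrow> nat \<Rightarrow> (nat \<Rightarrow> nat \<Rightarrow> real) \<Rightarrow> ('p \<Rightarrow> (nat \<Rightarrow> real) \<Rightarrow> real)
    \<Rightarrow> 'p set \<Rightarrow> bool \<Rightarrow> bool" where
  "robust_ms_stable n m K p S ti \<longleftrightarrow>
     (\<forall>x0 ths. adm ti S ths \<longrightarrow> (cond_sq_moment n m K p ths x0 \<longlonglongrightarrow> 0))"

definition ntil :: "nat \<Rightarrow> nat" where
  "ntil n = n * (n + 1) div 2"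

text \<open>Position of entry (i,j), i >= j, in vech (column-wise lower triangle).\<close>
definition vech_idx :: "nat \<Rightarrow> nat \<Rightarrow> nat \<Rightarrow> nat" where
  "vech_idx n i j = j * n - j * (j - 1) div 2 + (i - j)"

definition mmul :: "nat \<Rightarrow> (nat \<Rightarrow> nat \<Rightarrow> real) \<Rightarrow> (nat \<Rightarrow> nat \<Rightarrow> real) \<Rightarrow> nat \<Rightarrow> nat \<Rightarrow> real" where
  "mmul q A B = (\<lambda>i j. \<Sum>l<q. A i l * B l j)"

definition Iden :: "nat \<Rightarrow> nat \<Rightarrow> real" where
  "Iden i j = (if i = j then 1 else 0)"

text \<open>Kronecker product A (x) B where B has r rows and s columns.\<close>
definition kron :: "nat \<Rightarrow> nat \<Rightarrow> (nat \<Rightarrow> nat \<Rightarrow> real) \<Rightarrow> (nat \<Rightarrow> nat \<Rightarrow> real) \<Rightarrow> nat \<Rightarrow> nat \<Rightarrow> real" where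
  "kron r s A B = (\<lambda>i j. A (i div r) (j div s) * B (i mod r) (j mod s))"

text \<open>Elimination matrix E_e (ntil x n^2): E_e vec(X) = vech(X).\<close>
definition Ee :: "nat \<Rightarrow> nat \<Rightarrow> nat \<Rightarrow> real" where
  "Ee n r c = (if \<exists>i j. i < n \<and> j \<le> i \<and> r = vech_idx n i j \<and> c = j * n + i then 1 else 0)"

text \<open>Duplication matrix D (n^2 x ntil): D vech(Y) = vec(Y) for symmetric Y.\<close>
definition Dm :: "nat \<Rightarrow> nat \<Rightarrow> nat \<Rightarrow> real" where
  "Dm n c r = (if \<exists>i j. i < n \<and> j < n \<and> c = j * n + i \<and> r = vech_idx n (max i j) (min i j) then 1 else 0)"

definition Ccal :: "nat \<Rightarrow> (nat \<Rightarrow> nat \<Rightarrow> real) \<Rightarrow> nat \<Rightarrow> nat \<Rightarrow> real" where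
  "Ccal n Y = mmul (n^2) (mmul (n^2) (Ee n) Y) (Dm n)"

definition Mblk :: "nat \<Rightarrow> (nat \<Rightarrow> nat \<Rightarrow> real) \<Rightarrow> nat \<Rightarrow> nat \<Rightarrow> nat \<Rightarrow> nat \<Rightarrow> real" where
  "Mblk n M i j r c = M (i * n + r) (j * n + c)"

text \<open>Column j*n+i of F_aa is vec(M_{i,j}).\<close>
definition Faa :: "nat \<Rightarrow> (nat \<Rightarrow> nat \<Rightarrow> real) \<Rightarrow> nat \<Rightarrow> nat \<Rightarrow> real" where
  "Faa n M = (\<lambda>r c. Mblk n M (c mod n) (c div n) (r mod n) (r div n))"

text \<open>Column j*m+i' of F_ab is vec(M_{n+i',j}).\<close>
definition Fab :: "nat \<Rightarrow> nat \<Rightarrow> (nat \<Rightarrow> nat \<Rightarrow> real) \<Rightarrow> nat \<Rightarrow> nat \<Rightarrow> real" where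
  "Fab n m M = (\<lambda>r c. Mblk n M (n + c mod m) (c div m) (r mod n) (r div n))"

text \<open>Column j'*n+i of F_ba is vec(M_{i,n+j'}).\<close>
definition Fba :: "nat \<Rightarrow> nat \<Rightarrow> (nat \<Rightarrow> nat \<Rightarrow> real) \<Rightarrow> nat \<Rightarrow> nat \<Rightarrow> real" where
  "Fba n m M = (\<lambda>r c. Mblk n M (c mod n) (n + c div n) (r mod n) (r div n))"

text \<open>Column j'*m+i' of F_bb is vec(M_{n+i',n+j'}).\<close>
definition Fbb :: "nat \<Rightarrow> nat \<Rightarrow> (nat \<Rightarrow> nat \<Rightarrow> real) \<Rightarrow> nat \<Rightarrow> nat \<Rightarrow> real" where
  "Fbb n m M = (\<lambda>r c. Mblk n M (n + c mod m) (n + c div m) (r mod n) (r div n))"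

definition Fk :: "nat \<Rightarrow> nat \<Rightarrow> (nat \<Rightarrow> nat \<Rightarrow> real) \<Rightarrow> (nat \<Rightarrow> nat \<Rightarrow> real) \<Rightarrow> nat \<Rightarrow> nat \<Rightarrow> real" where
  "Fk n m M K = (\<lambda>r c. Faa n M r c
      - mmul (n * m) (Fab n m M) (kron m n Iden K) r c
      - mmul (m * n) (Fba n m M) (kron n n K Iden) r c
      + mmul (m * m) (Fbb n m M) (kron m n K K) r c)"

definition Fth :: "nat \<Rightarrow> nat \<Rightarrow> nat \<Rightarrow> (nat \<Rightarrow> nat \<Rightarrow> nat \<Rightarrow> real) \<Rightarrow> (nat \<Rightarrow> real)
    \<Rightarrow> (nat \<Rightarrow> nat \<Rightarrow> real) \<Rightarrow> nat \<Rightarrow> nat \<Rightarrow> real" where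
  "Fth n m N M th K = (\<lambda>r c. \<Sum>k<N. th k * Fk n m (M k) K r c)"

primrec exp_traj :: "nat \<Rightarrow> nat \<Rightarrow> nat \<Rightarrow> (nat \<Rightarrow> nat \<Rightarrow> nat \<Rightarrow> real) \<Rightarrow> (nat \<Rightarrow> nat \<Rightarrow> real)
    \<Rightarrow> (nat \<Rightarrow> real) \<Rightarrow> (nat \<Rightarrow> nat \<Rightarrow> real) \<Rightarrow> nat \<Rightarrow> nat \<Rightarrow> real" where
  "exp_traj n m N M K xt0 ths 0 = xt0"
| "exp_traj n m N M K xt0 ths (Suc t) =
     (\<lambda>i. \<Sum>j<ntil n. Ccal n (Fth n m N M (ths t) K) i j * exp_traj n m N M K xt0 ths t j)"

definition robustly_stable_exp :: "nat \<Rightarrow> nat \<Rightarrow> nat \<Rightarrow> (nat \<Rightarrow> nat \<Rightarrow> nat \<Rightarrow> real)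
    \<Rightarrow> (nat \<Rightarrow> nat \<Rightarrow> real) \<Rightarrow> (nat \<Rightarrow> real) set \<Rightarrow> bool \<Rightarrow> bool" where
  "robustly_stable_exp n m N M K Stil ti \<longleftrightarrow>
     (\<forall>xt0 ths. adm ti Stil ths \<longrightarrow>
        ((\<lambda>t. sqrt (sqnorm (ntil n) (exp_traj n m N M K xt0 ths t))) \<longlonglongrightarrow> 0))"

end

theory Submission
  imports Defs
begin

lemma sf_lebN: "sigma_finite_measure (lebN N)"
proof -
  interpret F: finite_product_sigma_finite "\<lambda>_. lborel" "{..<N}" by standard auto
  obtain A where A: "countable A" "A \<subseteq> sets (PiM {..<N} (\<lambda>_. lborel))"
    "\<Union>A = space (PiM {..<N} (\<lambda>_. lborel :: real measure))"
    "\<forall>a\<in>A. emeasure (PiM {..<N} (\<lambda>_. lborel)) a \<noteq> \<infinity>"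
    using F.sigma_finite_countable by blast
  show ?thesis unfolding lebN_def
    by (rule sigma_finite_measure.intro) (use A in \<open>auto intro!: exI[of _ A]\<close>)
qed

lemma psf: "product_sigma_finite (\<lambda>_::nat. lebN N)"
  by (intro product_sigma_finite.intro sf_lebN)

lemma meas_comp_leb: "k < N \<Longrightarrow> (\<lambda>v. v k) \<in> borel_measurable (lebN N)"
  unfolding lebN_def by (intro measurable_completion) simp

lemma upd_meas[measurable]:
  "(\<lambda>x. (fst x)(t := snd x)) \<in> PiM {..<t} (\<lambda>_::nat. M) \<Otimes>\<^sub>M M \<rightarrow>\<^sub>M PiM {..<Suc t} (\<lambda>_. M)"
  by (rule measurable_fun_upd[where J="{..<t}"]) (auto simp: lessThan_Suc)

lemma nn_step:
  fixes p :: "'p \<Rightarrow> (nat \<Rightarrow> real) \<Rightarrow> real"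
  assumes pm[measurable]: "\<And>s. p (ths s) \<in> borel_measurable (lebN N)"
    and pnn: "\<And>s v. v \<in> space (lebN N) \<Longrightarrow> 0 \<le> p (ths s) v"
    and f[measurable]: "f \<in> borel_measurable (PiM {..<Suc t} (\<lambda>_. lebN N))"
  shows "integral\<^sup>N (traj_law N p ths (Suc t)) f =
     (\<integral>\<^sup>+ w. \<integral>\<^sup>+ v. f (w(t:=v)) \<partial>vlaw N p (ths t) \<partial>traj_law N p ths t)"
proof -
  interpret PL: product_sigma_finite "\<lambda>_::nat. lebN N" by (rule psf)
  interpret L: sigma_finite_measure "lebN N" by (rule sf_lebN)
  let ?P = "\<lambda>t. PiM {..<t} (\<lambda>_::nat. lebN N)"
  let ?D = "\<lambda>t w. ennreal (\<Prod>s<t. p (ths s) (w s))"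
  have Dm[measurable]: "?D t' \<in> borel_measurable (PiM T (\<lambda>_::nat. lebN N))" if "{..<t'} \<subseteq> T" for t' T
  proof -
    have "(\<lambda>w. \<Prod>s<t'. p (ths s) (w s)) \<in> borel_measurable (PiM T (\<lambda>_::nat. lebN N))"
    proof (intro borel_measurable_prod)
      fix s assume "s \<in> {..<t'}"
      then have "(\<lambda>w. w s) \<in> PiM T (\<lambda>_::nat. lebN N) \<rightarrow>\<^sub>M lebN N" using that by auto
      from measurable_compose[OF this pm] show "(\<lambda>w. p (ths s) (w s)) \<in> borel_measurable (PiM T (\<lambda>_::nat. lebN N))" .
    qed
    then show ?thesis by measurable
  qed
  have fupd[measurable]: "(\<lambda>v. f (w(t:=v))) \<in> borel_measurable (lebN N)" if "w \<in> space (?P t)" for w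
    using measurable_comp[OF measurable_component_update[OF that, of t] f[unfolded lessThan_Suc]]
    by (simp add: comp_def)
  have "integral\<^sup>N (traj_law N p ths (Suc t)) f = (\<integral>\<^sup>+ w. ?D (Suc t) w * f w \<partial>?P (Suc t))"
    unfolding traj_law_def by (rule nn_integral_density) auto
  also have "\<dots> = (\<integral>\<^sup>+ w. ?D (Suc t) w * f w \<partial>PiM (insert t {..<t}) (\<lambda>_. lebN N))"
    by (simp add: lessThan_Suc)
  also have "\<dots> = (\<integral>\<^sup>+ w. \<integral>\<^sup>+ v. ?D (Suc t) (w(t:=v)) * f (w(t:=v)) \<partial>lebN N \<partial>?P t)"
    by (rule PL.product_nn_integral_insert) (auto simp: lessThan_Suc[symmetric])
  also have "\<dots> = (\<integral>\<^sup>+ w. ?D t w * \<integral>\<^sup>+ v. ennreal (p (ths t) v) * f (w(t:=v)) \<partial>lebN N \<partial>?P t)"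
  proof (rule nn_integral_cong)
    fix w assume w: "w \<in> space (?P t)"
    have "(\<integral>\<^sup>+ v. ?D (Suc t) (w(t:=v)) * f (w(t:=v)) \<partial>lebN N)
        = (\<integral>\<^sup>+ v. ?D t w * (ennreal (p (ths t) v) * f (w(t:=v))) \<partial>lebN N)"
    proof (rule nn_integral_cong)
      fix v assume v: "v \<in> space (lebN N)"
      have "(\<Prod>s<Suc t. p (ths s) ((w(t:=v)) s)) = (\<Prod>s<t. p (ths s) (w s)) * p (ths t) v"
      proof -
        have "(\<Prod>s<t. p (ths s) ((w(t:=v)) s)) = (\<Prod>s<t. p (ths s) (w s))" by (intro prod.cong) auto
        then show ?thesis by (simp only: prod.lessThan_Suc fun_upd_same)
      qed
      moreover have "0 \<le> (\<Prod>s<t. p (ths s) (w s))"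
        using w by (auto intro!: prod_nonneg pnn simp: space_PiM PiE_iff)
      ultimately show "?D (Suc t) (w(t:=v)) * f (w(t:=v)) = ?D t w * (ennreal (p (ths t) v) * f (w(t:=v)))"
        using pnn[OF v] by (simp add: ennreal_mult mult.assoc)
    qed
    also have "\<dots> = ?D t w * \<integral>\<^sup>+ v. ennreal (p (ths t) v) * f (w(t:=v)) \<partial>lebN N"
      using w fupd by (intro nn_integral_cmult) measurable
    finally show "(\<integral>\<^sup>+ v. ?D (Suc t) (w(t:=v)) * f (w(t:=v)) \<partial>lebN N) = ?D t w * \<integral>\<^sup>+ v. ennreal (p (ths t) v) * f (w(t:=v)) \<partial>lebN N" .
  qed
  also have "\<dots> = (\<integral>\<^sup>+ w. \<integral>\<^sup>+ v. ennreal (p (ths t) v) * f (w(t:=v)) \<partial>lebN N \<partial>traj_law N p ths t)"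
    unfolding traj_law_def by (rule nn_integral_density[symmetric]) measurable
  also have "\<dots> = (\<integral>\<^sup>+ w. \<integral>\<^sup>+ v. f (w(t:=v)) \<partial>vlaw N p (ths t) \<partial>traj_law N p ths t)"
  proof (rule nn_integral_cong)
    fix w assume w: "w \<in> space (traj_law N p ths t)"
    show "(\<integral>\<^sup>+ v. ennreal (p (ths t) v) * f (w(t:=v)) \<partial>lebN N) = (\<integral>\<^sup>+ v. f (w(t:=v)) \<partial>vlaw N p (ths t))"
      unfolding vlaw_def using w fupd[of w] by (intro nn_integral_density[symmetric]) (auto simp: traj_law_def)
  qed
  finally show ?thesis .
qed


locale trajctx =
  fixes N :: nat and p :: "'p \<Rightarrow> (nat \<Rightarrow> real) \<Rightarrow> real" and ths :: "nat \<Rightarrow> 'p"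
  assumes pm[measurable]: "\<And>s. p (ths s) \<in> borel_measurable (lebN N)"
  and pnn: "\<And>s v. v \<in> space (lebN N) \<Longrightarrow> 0 \<le> p (ths s) v"
  and p1: "\<And>s. (\<integral>\<^sup>+ v. ennreal (p (ths s) v) \<partial>lebN N) = 1"
begin

abbreviation "Q s \<equiv> vlaw N p (ths s)"
abbreviation "P t \<equiv> traj_law N p ths t"

lemma Q_prob: "prob_space (Q s)"
proof
  have "emeasure (Q s) (space (Q s)) = (\<integral>\<^sup>+ v. ennreal (p (ths s) v) * indicator (space (lebN N)) v \<partial>lebN N)"
    unfolding vlaw_def by (subst emeasure_density) auto
  also have "\<dots> = 1" using p1[of s] by (subst nn_integral_cong[where v="\<lambda>v. ennreal (p (ths s) v)"]) auto
  finally show "emeasure (Q s) (space (Q s)) = 1" .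
qed

lemma sets_P[measurable_cong]: "sets (P t) = sets (PiM {..<t} (\<lambda>_. lebN N))"
  unfolding traj_law_def by simp

lemma sets_Q[measurable_cong]: "sets (Q s) = sets (lebN N)"
  unfolding vlaw_def by simp

lemma g_meas[measurable]: "(\<lambda>x. (fst x)(t := snd x)) \<in> P t \<Otimes>\<^sub>M Q t \<rightarrow>\<^sub>M PiM {..<Suc t} (\<lambda>_. lebN N)"
  using upd_meas by (subst measurable_cong_sets[OF sets_pair_measure_cong[OF sets_P sets_Q] refl])

lemma P_eq: "P (Suc t) = distr (P t \<Otimes>\<^sub>M Q t) (PiM {..<Suc t} (\<lambda>_. lebN N)) (\<lambda>(w,v). w(t:=v))"
proof (rule measure_eqI)
  interpret Qs: prob_space "Q t" by (rule Q_prob)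
  show "sets (P (Suc t)) = sets (distr (P t \<Otimes>\<^sub>M Q t) (PiM {..<Suc t} (\<lambda>_. lebN N)) (\<lambda>(w,v). w(t:=v)))"
    by (simp add: traj_law_def)
  fix A assume A: "A \<in> sets (P (Suc t))"
  then have A'[measurable]: "A \<in> sets (PiM {..<Suc t} (\<lambda>_. lebN N))" by (simp add: traj_law_def)
  have "emeasure (P (Suc t)) A = integral\<^sup>N (P (Suc t)) (indicator A)"
    using A by simp
  also have "\<dots> = (\<integral>\<^sup>+ w. \<integral>\<^sup>+ v. indicator A (w(t:=v)) \<partial>Q t \<partial>P t)"
    apply (rule nn_step) apply (rule pm) apply (erule pnn) apply (rule borel_measurable_indicator[OF A']) done
  also have "\<dots> = integral\<^sup>N (P t \<Otimes>\<^sub>M Q t) (\<lambda>x. indicator A ((fst x)(t := snd x)))"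
    by (subst Qs.nn_integral_fst[symmetric]) (rule measurable_comp[OF g_meas borel_measurable_indicator[OF A'], unfolded comp_def], simp)
  also have "\<dots> = integral\<^sup>N (distr (P t \<Otimes>\<^sub>M Q t) (PiM {..<Suc t} (\<lambda>_. lebN N)) (\<lambda>(w,v). w(t:=v))) (indicator A)"
    by (subst nn_integral_distr) (auto simp: case_prod_beta)
  also have "\<dots> = emeasure (distr (P t \<Otimes>\<^sub>M Q t) (PiM {..<Suc t} (\<lambda>_. lebN N)) (\<lambda>(w,v). w(t:=v))) A"
    by (subst nn_integral_indicator) auto
  finally show "emeasure (P (Suc t)) A = emeasure (distr (P t \<Otimes>\<^sub>M Q t) (PiM {..<Suc t} (\<lambda>_. lebN N)) (\<lambda>(w,v). w(t:=v))) A" .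
qed

lemma P_prob: "prob_space (P t)"
proof (induction t)
  case 0
  show ?case
  proof
    show "emeasure (P 0) (space (P 0)) = 1"
      unfolding traj_law_def by (subst emeasure_density) (auto simp: PiM_empty)
  qed
next
  case (Suc t)
  interpret Pt: prob_space "P t" by (rule Suc)
  interpret Qs: prob_space "Q t" by (rule Q_prob)
  interpret PQ: pair_prob_space "P t" "Q t" by unfold_locales
  show ?case unfolding P_eq by (rule PQ.prob_space_distr) (auto simp: case_prod_beta)
qed

lemma prod_int:
  fixes \<alpha> :: "(nat \<Rightarrow> real) \<Rightarrow> real" and \<beta> :: "(nat \<Rightarrow> nat \<Rightarrow> real) \<Rightarrow> real"
  assumes a: "integrable (Q t) \<alpha>" and b: "integrable (P t) \<beta>"
    and bm: "\<beta> \<in> borel_measurable (PiM {..<Suc t} (\<lambda>_. lebN N))"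
    and bu: "\<And>w v. \<beta> (w(t:=v)) = \<beta> w"
  shows "integrable (P (Suc t)) (\<lambda>w. \<alpha> (w t) * \<beta> w)"
    and "integral\<^sup>L (P (Suc t)) (\<lambda>w. \<alpha> (w t) * \<beta> w) = integral\<^sup>L (Q t) \<alpha> * integral\<^sup>L (P t) \<beta>"
proof -
  interpret Pt: prob_space "P t" by (rule P_prob)
  interpret Qs: prob_space "Q t" by (rule Q_prob)
  interpret PQ: pair_prob_space "P t" "Q t" by unfold_locales
  have am: "\<alpha> \<in> borel_measurable (lebN N)"
    using borel_measurable_integrable[OF a] by (simp add: measurable_cong_sets[OF sets_Q refl])
  have bm0: "\<beta> \<in> borel_measurable (P t)"
    using borel_measurable_integrable[OF b] .
  have Fm: "(\<lambda>w. \<alpha> (w t) * \<beta> w) \<in> borel_measurable (PiM {..<Suc t} (\<lambda>_. lebN N))"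
  proof -
    have "(\<lambda>w. w t) \<in> PiM {..<Suc t} (\<lambda>_. lebN N) \<rightarrow>\<^sub>M lebN N" by simp
    from measurable_compose[OF this am] bm show ?thesis by simp
  qed
  let ?g = "\<lambda>(w,v). w(t:=v)"
  have gm: "?g \<in> P t \<Otimes>\<^sub>M Q t \<rightarrow>\<^sub>M PiM {..<Suc t} (\<lambda>_. lebN N)"
    using g_meas[of t] by (simp add: case_prod_beta)
  have Fg: "(\<lambda>x. \<alpha> (?g x t) * \<beta> (?g x)) = (\<lambda>x. \<beta> (fst x) * \<alpha> (snd x))"
    by (auto simp: bu)
  have aQ: "\<alpha> \<in> borel_measurable (Q t)" using borel_measurable_integrable[OF a] .
  have Hm: "(\<lambda>x. \<beta> (fst x) * \<alpha> (snd x)) \<in> borel_measurable (P t \<Otimes>\<^sub>M Q t)"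
    using bm0 aQ by measurable
  have intH: "integrable (P t \<Otimes>\<^sub>M Q t) (\<lambda>x. \<beta> (fst x) * \<alpha> (snd x))"
  proof (rule integrableI_bounded[OF Hm])
    have "(\<integral>\<^sup>+ x. ennreal (norm (\<beta> (fst x) * \<alpha> (snd x))) \<partial>(P t \<Otimes>\<^sub>M Q t))
        = (\<integral>\<^sup>+ w. \<integral>\<^sup>+ v. ennreal (norm (\<beta> w)) * ennreal (norm (\<alpha> v)) \<partial>Q t \<partial>P t)"
      by (subst Qs.nn_integral_fst[symmetric]) (use bm0 aQ in \<open>measurable, auto simp: ennreal_mult abs_mult\<close>)
    also have "\<dots> = (\<integral>\<^sup>+ w. ennreal (norm (\<beta> w)) * (\<integral>\<^sup>+ v. ennreal (norm (\<alpha> v)) \<partial>Q t) \<partial>P t)"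
      using aQ by (intro nn_integral_cong nn_integral_cmult) auto
    also have "\<dots> = (\<integral>\<^sup>+ w. ennreal (norm (\<beta> w)) \<partial>P t) * (\<integral>\<^sup>+ v. ennreal (norm (\<alpha> v)) \<partial>Q t)"
      using bm0 by (intro nn_integral_multc) auto
    also have "\<dots> < \<infinity>"
      using a b unfolding integrable_iff_bounded by (simp add: ennreal_mult_less_top)
    finally show "(\<integral>\<^sup>+ x. ennreal (norm (\<beta> (fst x) * \<alpha> (snd x))) \<partial>(P t \<Otimes>\<^sub>M Q t)) < \<infinity>" .
  qed
  show "integrable (P (Suc t)) (\<lambda>w. \<alpha> (w t) * \<beta> w)"
    unfolding P_eq by (subst integrable_distr_eq[OF gm Fm]) (simp only: Fg intH)
  have "integral\<^sup>L (P (Suc t)) (\<lambda>w. \<alpha> (w t) * \<beta> w) = integral\<^sup>L (P t \<Otimes>\<^sub>M Q t) (\<lambda>x. \<beta> (fst x) * \<alpha> (snd x))"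
    unfolding P_eq by (subst integral_distr[OF gm Fm]) (simp only: Fg)
  also have "\<dots> = (\<integral>w. \<integral>v. \<beta> (fst (w,v)) * \<alpha> (snd (w,v)) \<partial>Q t \<partial>P t)"
    by (rule PQ.integral_fst'[symmetric, OF intH])
  also have "\<dots> = (\<integral>w. \<beta> w * integral\<^sup>L (Q t) \<alpha> \<partial>P t)"
    by simp
  also have "\<dots> = integral\<^sup>L (Q t) \<alpha> * integral\<^sup>L (P t) \<beta>"
    by (simp add: mult.commute)
  finally show "integral\<^sup>L (P (Suc t)) (\<lambda>w. \<alpha> (w t) * \<beta> w) = integral\<^sup>L (Q t) \<alpha> * integral\<^sup>L (P t) \<beta>" .
qed

end

lemma sum_split_nat: "(\<Sum>l<q*k. (g l :: real)) = (\<Sum>a<q. \<Sum>b<k. g (a*k + b :: nat))"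
proof -
  have "(\<Sum>l<q*k. g l) = (\<Sum>a<q. sum g {a*k..<a*k+k})" by (rule sum.nat_group[symmetric])
  also have "\<dots> = (\<Sum>a<q. \<Sum>b<k. g (a*k + b))"
  proof (rule sum.cong[OF refl])
    fix a
    have "sum g {a*k..<a*k+k} = sum g {0+a*k..<k+a*k}" by (simp add: add.commute)
    also have "\<dots> = (\<Sum>b=0..<k. g (b + a*k))" by (rule sum.shift_bounds_nat_ivl)
    finally show "sum g {a*k..<a*k+k} = (\<Sum>b<k. g (a*k + b))" by (simp add: atLeast0LessThan add.commute)
  qed
  finally show ?thesis .
qed

lemma Fk_entry:
  assumes n: "0 < n" and ab: "a < n" "b < n" "i < n" "j < n"
  shows "Fk n m M K (a + b*n) (i + j*n) =
      M (i*n + a) (j*n + b)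
    - (\<Sum>i'<m. K i' i * M ((n+i')*n + a) (j*n + b))
    - (\<Sum>j'<m. K j' j * M (i*n + a) ((n+j')*n + b))
    + (\<Sum>i'<m. \<Sum>j'<m. K i' i * K j' j * M ((n+i')*n + a) ((n+j')*n + b))"
proof -
  have dm: "(x + y*n) mod n = x" "(x + y*n) div n = y" if "x < n" for x y
    using that n by auto
  have dm2: "(y*m + x) mod m = x" "(y*m + x) div m = y" if "x < m" for x y
    using that by auto
  have t1: "mmul (n * m) (Fab n m M) (kron m n Iden K) (a + b*n) (i + j*n)
      = (\<Sum>i'<m. K i' i * M ((n+i')*n + a) (j*n + b))"
  proof -
    have "mmul (n * m) (Fab n m M) (kron m n Iden K) (a + b*n) (i + j*n)
      = (\<Sum>a'<n. \<Sum>b'<m. Fab n m M (a + b*n) (a'*m+b') * kron m n Iden K (a'*m+b') (i + j*n))"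
      unfolding mmul_def by (rule sum_split_nat)
    also have "\<dots> = (\<Sum>a'<n. \<Sum>b'<m. (if a' = j then K b' i * M ((n+b')*n + a) (j*n + b) else 0))"
      using ab by (intro sum.cong refl) (auto simp: Fab_def kron_def Mblk_def Iden_def dm dm2 mult.commute)
    also have "\<dots> = (\<Sum>a'<n. if a' = j then (\<Sum>b'<m. K b' i * M ((n+b')*n + a) (j*n + b)) else 0)"
      by (intro sum.cong) auto
    also have "\<dots> = (\<Sum>b'<m. K b' i * M ((n+b')*n + a) (j*n + b))"
      using ab by simp
    finally show ?thesis .
  qed
  have t2: "mmul (m * n) (Fba n m M) (kron n n K Iden) (a + b*n) (i + j*n)
      = (\<Sum>j'<m. K j' j * M (i*n + a) ((n+j')*n + b))"
  proof -
    have "mmul (m * n) (Fba n m M) (kron n n K Iden) (a + b*n) (i + j*n)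
      = (\<Sum>a'<m. \<Sum>b'<n. Fba n m M (a + b*n) (a'*n+b') * kron n n K Iden (a'*n+b') (i + j*n))"
      unfolding mmul_def by (rule sum_split_nat)
    also have "\<dots> = (\<Sum>a'<m. \<Sum>b'<n. (if b' = i then K a' j * M (i*n + a) ((n+a')*n + b) else 0))"
      using ab n by (intro sum.cong refl) (auto simp: Fba_def kron_def Mblk_def Iden_def dm mult.commute)
    also have "\<dots> = (\<Sum>a'<m. K a' j * M (i*n + a) ((n+a')*n + b))"
      using ab by simp
    finally show ?thesis .
  qed
  have t3: "mmul (m * m) (Fbb n m M) (kron m n K K) (a + b*n) (i + j*n)
      = (\<Sum>i'<m. \<Sum>j'<m. K i' i * K j' j * M ((n+i')*n + a) ((n+j')*n + b))"
  proof -
    have "mmul (m * m) (Fbb n m M) (kron m n K K) (a + b*n) (i + j*n)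
      = (\<Sum>a'<m. \<Sum>b'<m. Fbb n m M (a + b*n) (a'*m+b') * kron m n K K (a'*m+b') (i + j*n))"
      unfolding mmul_def by (rule sum_split_nat)
    also have "\<dots> = (\<Sum>a'<m. \<Sum>b'<m. K b' i * K a' j * M ((n+b')*n + a) ((n+a')*n + b))"
      using ab by (intro sum.cong refl) (auto simp: Fbb_def kron_def Mblk_def dm dm2 mult.commute)
    also have "\<dots> = (\<Sum>i'<m. \<Sum>j'<m. K i' i * K j' j * M ((n+i')*n + a) ((n+j')*n + b))"
      by (subst sum.swap) simp
    finally show ?thesis .
  qed
  show ?thesis
    unfolding Fk_def t1 t2 t3 using ab by (simp add: Faa_def Mblk_def dm mult.commute)
qed

definition Phi :: "nat \<Rightarrow> nat \<Rightarrow> (nat \<Rightarrow> nat \<Rightarrow> real) \<Rightarrow> (nat \<Rightarrow> real) \<Rightarrow> nat \<Rightarrow> nat \<Rightarrow> real" where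
  "Phi n m K v a i = Amat n v a i - (\<Sum>l<m. Bmat n v a l * K l i)"

lemma xtraj_Suc': "xtraj n m K x0 w (Suc t) a = (\<Sum>i<n. Phi n m K (w t) a i * xtraj n m K x0 w t i)"
  by (simp add: cl_step_def Phi_def)

lemma xtraj_upd: "t \<le> s \<Longrightarrow> xtraj n m K x0 (w(s:=v)) t = xtraj n m K x0 w t"
  by (induction t) (auto simp: cl_step_def)

definition Eexp :: "nat \<Rightarrow> nat \<Rightarrow> (nat \<Rightarrow> nat \<Rightarrow> real) \<Rightarrow> (nat \<Rightarrow> nat \<Rightarrow> real) \<Rightarrow> nat \<Rightarrow> nat \<Rightarrow> nat \<Rightarrow> nat \<Rightarrow> real" where
  "Eexp n m K G a i b j = G (i*n + a) (j*n + b)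
    - (\<Sum>i'<m. K i' i * G ((n+i')*n + a) (j*n + b))
    - (\<Sum>j'<m. K j' j * G (i*n + a) ((n+j')*n + b))
    + (\<Sum>i'<m. \<Sum>j'<m. K i' i * K j' j * G ((n+i')*n + a) ((n+j')*n + b))"

lemma Eexp_lin: "Eexp n m K (\<lambda>x y. \<Sum>k<Nk. c k * G k x y) a i b j = (\<Sum>k<Nk. c k * Eexp n m K (G k) a i b j)"
  unfolding Eexp_def
  by (simp add: sum_subtractf sum.distrib sum_distrib_left right_diff_distrib distrib_left
      sum.swap[of _ "{..<Nk}"] mult.left_commute)

lemma Phi_prod: "Phi n m K v a i * Phi n m K v b j = Eexp n m K (\<lambda>x y. v x * v y) a i b j"
proof -
  have "Phi n m K v a i * Phi n m K v b j =
     (v (i*n+a) - (\<Sum>i'<m. K i' i * v ((n+i')*n + a))) * (v (j*n+b) - (\<Sum>j'<m. K j' j * v ((n+j')*n + b)))"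
    by (simp add: Phi_def Amat_def Bmat_def mult.commute)
  also have "\<dots> = Eexp n m K (\<lambda>x y. v x * v y) a i b j"
    unfolding Eexp_def
    apply (simp add: left_diff_distrib right_diff_distrib sum_distrib_left sum_distrib_right
        sum_product mult.commute mult.left_commute)
    apply (subst sum.swap)
    apply (simp add: ac_simps)
    done
  finally show ?thesis .
qed

lemma Eexp_int:
  fixes \<mu> :: "(nat \<Rightarrow> real) measure"
  assumes I: "\<And>x y. x < n*(n+m) \<Longrightarrow> y < n*(n+m) \<Longrightarrow> integrable \<mu> (\<lambda>v. v x * v y)"
    and ab: "a < n" "b < n" "i < n" "j < n"
  shows "integrable \<mu> (\<lambda>v. Eexp n m K (\<lambda>x y. v x * v y) a i b j)"
    and "(\<integral>v. Eexp n m K (\<lambda>x y. v x * v y) a i b j \<partial>\<mu>) = Eexp n m K (\<lambda>x y. \<integral>v. v x * v y \<partial>\<mu>) a i b j"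
proof -
  have iA: "i'*n + a' < n*(n+m)" if "a' < n" "i' < n" for a' i'
  proof -
    from that have "i'*n + a' < (i'+1)*n" by simp
    also have "\<dots> \<le> n*n" using that by (intro mult_right_mono) auto
    finally show ?thesis by (simp add: distrib_left)
  qed
  have iB: "(n+l)*n + a' < n*(n+m)" if "a' < n" "l < m" for a' l
  proof -
    from that have "(n+l)*n + a' < (n+l+1)*n" by simp
    also have "\<dots> \<le> (n+m)*n" using that by (intro mult_right_mono) auto
    finally show ?thesis by (simp add: mult.commute)
  qed
  note ints = I[OF iA iA] I[OF iA iB] I[OF iB iA] I[OF iB iB]
  show "integrable \<mu> (\<lambda>v. Eexp n m K (\<lambda>x y. v x * v y) a i b j)"
    unfolding Eexp_def
    by (intro Bochner_Integration.integrable_diff Bochner_Integration.integrable_add Bochner_Integration.integrable_sum integrable_mult_right ints) (use ab in auto)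
  have IC: "integrable \<mu> (\<lambda>v. c * (v x * v y))" if "x < n*(n+m)" "y < n*(n+m)" for c x y
    using I[OF that] by simp
  have I1: "integrable \<mu> (\<lambda>v. v (i*n+a) * v (j*n+b))" using ab by (intro ints)
  have I2: "integrable \<mu> (\<lambda>v. \<Sum>i'<m. K i' i * (v ((n+i')*n+a) * v (j*n+b)))"
    by (intro Bochner_Integration.integrable_sum IC) (use ab iA iB in auto)
  have I3: "integrable \<mu> (\<lambda>v. \<Sum>j'<m. K j' j * (v (i*n+a) * v ((n+j')*n+b)))"
    by (intro Bochner_Integration.integrable_sum IC) (use ab iA iB in auto)
  have I4: "integrable \<mu> (\<lambda>v. \<Sum>i'<m. \<Sum>j'<m. K i' i * K j' j * (v ((n+i')*n+a) * v ((n+j')*n+b)))"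
    by (intro Bochner_Integration.integrable_sum IC) (use ab iA iB in auto)
  have J2: "(\<integral>v. (\<Sum>i'<m. K i' i * (v ((n+i')*n+a) * v (j*n+b))) \<partial>\<mu>) = (\<Sum>i'<m. K i' i * (\<integral>v. v ((n+i')*n+a) * v (j*n+b) \<partial>\<mu>))"
    by (subst Bochner_Integration.integral_sum) (rule IC, use ab iA iB in auto)
  have J3: "(\<integral>v. (\<Sum>j'<m. K j' j * (v (i*n+a) * v ((n+j')*n+b))) \<partial>\<mu>) = (\<Sum>j'<m. K j' j * (\<integral>v. v (i*n+a) * v ((n+j')*n+b) \<partial>\<mu>))"
    by (subst Bochner_Integration.integral_sum) (rule IC, use ab iA iB in auto)
  have J4: "(\<integral>v. (\<Sum>i'<m. \<Sum>j'<m. K i' i * K j' j * (v ((n+i')*n+a) * v ((n+j')*n+b))) \<partial>\<mu>)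
     = (\<Sum>i'<m. \<Sum>j'<m. K i' i * K j' j * (\<integral>v. v ((n+i')*n+a) * v ((n+j')*n+b) \<partial>\<mu>))"
    apply (subst Bochner_Integration.integral_sum)
     apply (rule Bochner_Integration.integrable_sum, rule IC, use ab iA iB in auto)
    apply (intro sum.cong refl)
    apply (subst Bochner_Integration.integral_sum)
     apply (rule IC, use ab iA iB in auto)
    done
  have "(\<integral>v. Eexp n m K (\<lambda>x y. v x * v y) a i b j \<partial>\<mu>) =
     (\<integral>v. v (i*n+a) * v (j*n+b) \<partial>\<mu>) - (\<integral>v. (\<Sum>i'<m. K i' i * (v ((n+i')*n+a) * v (j*n+b))) \<partial>\<mu>)
     - (\<integral>v. (\<Sum>j'<m. K j' j * (v (i*n+a) * v ((n+j')*n+b))) \<partial>\<mu>)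
     + (\<integral>v. (\<Sum>i'<m. \<Sum>j'<m. K i' i * K j' j * (v ((n+i')*n+a) * v ((n+j')*n+b))) \<partial>\<mu>)"
    unfolding Eexp_def
    by (simp only: Bochner_Integration.integral_add Bochner_Integration.integral_diff
        Bochner_Integration.integrable_diff I1 I2 I3 I4)
  then show "(\<integral>v. Eexp n m K (\<lambda>x y. v x * v y) a i b j \<partial>\<mu>) = Eexp n m K (\<lambda>x y. \<integral>v. v x * v y \<partial>\<mu>) a i b j"
    unfolding J2 J3 J4 by (simp add: Eexp_def)
qed

locale sysctx = trajctx N p ths for N :: nat and p :: "'p \<Rightarrow> (nat \<Rightarrow> real) \<Rightarrow> real" and ths +
  fixes n m :: nat and K :: "nat \<Rightarrow> nat \<Rightarrow> real" and Nk :: nat and M :: "nat \<Rightarrow> nat \<Rightarrow> nat \<Rightarrow> real"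
    and \<phi> :: "'p \<Rightarrow> nat \<Rightarrow> real"
  assumes N_def: "N = n * (n + m)" and npos: "0 < n"
    and smp': "\<And>s x y. x < N \<Longrightarrow> y < N \<Longrightarrow> integrable (Q s) (\<lambda>v. v x * v y)
         \<and> (\<integral>v. v x * v y \<partial>Q s) = (\<Sum>k<Nk. \<phi> (ths s) k * M k x y)"
begin

lemma idxA: "a < n \<Longrightarrow> i < n \<Longrightarrow> i*n + a < N"
proof -
  assume "a < n" "i < n"
  then have "i*n + a < (i+1)*n" by simp
  also have "\<dots> \<le> n*n" using \<open>i < n\<close> by (intro mult_right_mono) auto
  also have "\<dots> \<le> N" unfolding N_def by simp
  finally show ?thesis .
qed

lemma idxB: "a < n \<Longrightarrow> l < m \<Longrightarrow> (n+l)*n + a < N"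
proof -
  assume "a < n" "l < m"
  then have "(n+l)*n + a < (n+l+1)*n" by simp
  also have "\<dots> \<le> (n+m)*n" using \<open>l < m\<close> by (intro mult_right_mono) auto
  finally show ?thesis unfolding N_def by (simp add: mult.commute)
qed

lemma Phi_meas: "a < n \<Longrightarrow> i < n \<Longrightarrow> (\<lambda>v. Phi n m K v a i) \<in> borel_measurable (lebN N)"
  unfolding Phi_def Amat_def Bmat_def
  using idxA idxB meas_comp_leb by (intro borel_measurable_diff borel_measurable_sum borel_measurable_times) auto

lemma xtraj_meas: "a < n \<Longrightarrow> {..<t} \<subseteq> T \<Longrightarrow> (\<lambda>w. xtraj n m K x0 w t a) \<in> borel_measurable (PiM T (\<lambda>_. lebN N))"
proof (induction t arbitrary: a)
  case 0 then show ?case by simp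
next
  case (Suc t)
  have ct: "(\<lambda>w. w t) \<in> PiM T (\<lambda>_. lebN N) \<rightarrow>\<^sub>M lebN N" using Suc.prems by auto
  show ?case unfolding xtraj_Suc'
  proof (intro borel_measurable_sum borel_measurable_times)
    fix i assume i: "i \<in> {..<n}"
    show "(\<lambda>w. Phi n m K (w t) a i) \<in> borel_measurable (PiM T (\<lambda>_. lebN N))"
      using measurable_compose[OF ct Phi_meas[of a i]] Suc.prems i by simp
    show "(\<lambda>w. xtraj n m K x0 w t i) \<in> borel_measurable (PiM T (\<lambda>_. lebN N))"
      using Suc.IH[of i] Suc.prems i by (auto simp: subset_eq)
  qed
qed



lemma Eexp_cong:
  assumes "\<And>x y. x < N \<Longrightarrow> y < N \<Longrightarrow> G x y = G' x y" "a < n" "b < n" "i < n" "j < n"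
  shows "Eexp n m K G a i b j = Eexp n m K G' a i b j"
  unfolding Eexp_def
  by (intro arg_cong2[where f="(+)"] arg_cong2[where f="(-)"] sum.cong refl arg_cong2[where f="(*)"])
    (use assms(2-5) in \<open>auto intro!: assms(1) idxA idxB\<close>)

lemma Phi_int:
  assumes ab: "a < n" "b < n" "i < n" "j < n"
  shows "integrable (Q s) (\<lambda>v. Phi n m K v a i * Phi n m K v b j)"
    and "(\<integral>v. Phi n m K v a i * Phi n m K v b j \<partial>Q s) = Fth n m Nk M (\<phi> (ths s)) K (a + b*n) (i + j*n)"
proof -
  have I: "\<And>x y. x < n*(n+m) \<Longrightarrow> y < n*(n+m) \<Longrightarrow> integrable (Q s) (\<lambda>v. v x * v y)"
    using smp' N_def by auto
  show "integrable (Q s) (\<lambda>v. Phi n m K v a i * Phi n m K v b j)"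
    unfolding Phi_prod by (rule Eexp_int(1)[OF I ab])
  have "(\<integral>v. Phi n m K v a i * Phi n m K v b j \<partial>Q s) = Eexp n m K (\<lambda>x y. \<integral>v. v x * v y \<partial>Q s) a i b j"
    unfolding Phi_prod by (rule Eexp_int(2)[OF I ab])
  also have "\<dots> = Eexp n m K (\<lambda>x y. \<Sum>k<Nk. \<phi> (ths s) k * M k x y) a i b j"
    by (rule Eexp_cong[OF _ ab]) (use smp' in auto)
  also have "\<dots> = (\<Sum>k<Nk. \<phi> (ths s) k * Eexp n m K (M k) a i b j)"
    by (rule Eexp_lin)
  also have "\<dots> = Fth n m Nk M (\<phi> (ths s)) K (a + b*n) (i + j*n)"
    unfolding Fth_def using Fk_entry[OF npos ab] by (simp add: Eexp_def)
  finally show "(\<integral>v. Phi n m K v a i * Phi n m K v b j \<partial>Q s) = Fth n m Nk M (\<phi> (ths s)) K (a + b*n) (i + j*n)" .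
qed

lemma X_int_rec:
  "(\<forall>a<n. \<forall>b<n. integrable (P t) (\<lambda>w. xtraj n m K x0 w t a * xtraj n m K x0 w t b))"
proof (induction t)
  case 0
  interpret prob_space "P 0" by (rule P_prob)
  show ?case by simp
next
  case (Suc t)
  show ?case
  proof (intro allI impI)
    fix a b assume ab: "a < n" "b < n"
    have eq: "(\<lambda>w. xtraj n m K x0 w (Suc t) a * xtraj n m K x0 w (Suc t) b) =
      (\<lambda>w. \<Sum>i<n. \<Sum>j<n. (Phi n m K (w t) a i * Phi n m K (w t) b j) * (xtraj n m K x0 w t i * xtraj n m K x0 w t j))"
      by (simp only: xtraj_Suc' sum_product) (simp add: mult_ac)
    show "integrable (P (Suc t)) (\<lambda>w. xtraj n m K x0 w (Suc t) a * xtraj n m K x0 w (Suc t) b)"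
      unfolding eq
    proof (intro Bochner_Integration.integrable_sum)
      fix i j assume ij: "i \<in> {..<n}" "j \<in> {..<n}"
      show "integrable (P (Suc t)) (\<lambda>w. (Phi n m K (w t) a i * Phi n m K (w t) b j) * (xtraj n m K x0 w t i * xtraj n m K x0 w t j))"
        using ij ab Suc.IH
        by (intro prod_int(1) Phi_int(1) borel_measurable_times xtraj_meas) (auto simp: xtraj_upd)
    qed
  qed
qed

lemma X_rec:
  assumes ab: "a < n" "b < n"
  shows "(\<integral>w. xtraj n m K x0 w (Suc t) a * xtraj n m K x0 w (Suc t) b \<partial>P (Suc t)) =
     (\<Sum>i<n. \<Sum>j<n. Fth n m Nk M (\<phi> (ths t)) K (a + b*n) (i + j*n) * (\<integral>w. xtraj n m K x0 w t i * xtraj n m K x0 w t j \<partial>P t))"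
proof -
  have eq: "(\<lambda>w. xtraj n m K x0 w (Suc t) a * xtraj n m K x0 w (Suc t) b) =
      (\<lambda>w. \<Sum>i<n. \<Sum>j<n. (Phi n m K (w t) a i * Phi n m K (w t) b j) * (xtraj n m K x0 w t i * xtraj n m K x0 w t j))"
    by (simp only: xtraj_Suc' sum_product) (simp add: mult_ac)
  have pi: "integrable (P (Suc t)) (\<lambda>w. (Phi n m K (w t) a i * Phi n m K (w t) b j) * (xtraj n m K x0 w t i * xtraj n m K x0 w t j))"
    and pe: "(\<integral>w. (Phi n m K (w t) a i * Phi n m K (w t) b j) * (xtraj n m K x0 w t i * xtraj n m K x0 w t j) \<partial>P (Suc t))
       = Fth n m Nk M (\<phi> (ths t)) K (a + b*n) (i + j*n) * (\<integral>w. xtraj n m K x0 w t i * xtraj n m K x0 w t j \<partial>P t)"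
    if ij: "i < n" "j < n" for i j
  proof -
    have a1: "integrable (Q t) (\<lambda>v. Phi n m K v a i * Phi n m K v b j)" using Phi_int(1) ab ij by auto
    have b1: "integrable (P t) (\<lambda>w. xtraj n m K x0 w t i * xtraj n m K x0 w t j)" using X_int_rec ij by auto
    have bm: "(\<lambda>w. xtraj n m K x0 w t i * xtraj n m K x0 w t j) \<in> borel_measurable (PiM {..<Suc t} (\<lambda>_. lebN N))"
      using ij by (intro borel_measurable_times xtraj_meas) auto
    have bu: "\<And>w v. xtraj n m K x0 (w(t:=v)) t i * xtraj n m K x0 (w(t:=v)) t j = xtraj n m K x0 w t i * xtraj n m K x0 w t j"
      by (simp add: xtraj_upd)
    show "integrable (P (Suc t)) (\<lambda>w. (Phi n m K (w t) a i * Phi n m K (w t) b j) * (xtraj n m K x0 w t i * xtraj n m K x0 w t j))"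
      using prod_int(1)[OF a1 b1 bm bu] .
    show "(\<integral>w. (Phi n m K (w t) a i * Phi n m K (w t) b j) * (xtraj n m K x0 w t i * xtraj n m K x0 w t j) \<partial>P (Suc t))
       = Fth n m Nk M (\<phi> (ths t)) K (a + b*n) (i + j*n) * (\<integral>w. xtraj n m K x0 w t i * xtraj n m K x0 w t j \<partial>P t)"
      using prod_int(2)[OF a1 b1 bm bu] Phi_int(2)[OF ab ij, of t] by simp
  qed
  show ?thesis
    unfolding eq
    apply (subst Bochner_Integration.integral_sum)
     apply (rule Bochner_Integration.integrable_sum, rule pi, simp, simp)
    apply (intro sum.cong refl)
    apply (subst Bochner_Integration.integral_sum)
     apply (rule pi, simp, simp)
    apply (intro sum.cong refl pe)
     apply simp_all
    done
qed

end

primrec Sv :: "nat \<Rightarrow> nat \<Rightarrow> nat" where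
  "Sv n 0 = 0" | "Sv n (Suc j) = Sv n j + (n - j)"

lemma Sv_closed: "j \<le> n \<Longrightarrow> 2 * Sv n j + j*(j-1) = 2*j*n"
proof (induction j)
  case 0 then show ?case by simp
next
  case (Suc j)
  then have IH: "2 * Sv n j + j*(j-1) = 2*j*n" and jn: "j < n" by auto
  have "2 * Sv n (Suc j) + Suc j * j = 2 * Sv n j + j*(j-1) + 2*(n-j) + 2*j"
    by (cases j) (auto simp: algebra_simps)
  also have "\<dots> = 2*j*n + 2*n" using IH jn by simp
  finally show ?case by (simp add: algebra_simps)
qed

lemma vech_idx_Sv: "j \<le> i \<Longrightarrow> i < n \<Longrightarrow> vech_idx n i j = Sv n j + (i - j)"
proof -
  assume ji: "j \<le> i" "i < n"
  have c: "2 * Sv n j + j*(j-1) = 2*j*n" using Sv_closed[of j n] ji by simp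
  then have "j*(j-1) div 2 = j*n - Sv n j" by auto
  moreover have "Sv n j \<le> j*n" using c by auto
  ultimately show ?thesis unfolding vech_idx_def by simp
qed

lemma ntil_Sv: "ntil n = Sv n n"
proof -
  have c: "2 * Sv n n + n*(n-1) = 2*n*n" using Sv_closed[of n n] by simp
  have "n*(n+1) = 2 * Sv n n"
  proof (cases n)
    case 0 then show ?thesis by simp
  next
    case (Suc k) then show ?thesis using c by (simp add: algebra_simps)
  qed
  then show ?thesis unfolding ntil_def by simp
qed

lemma Sv_mono: "j \<le> j' \<Longrightarrow> Sv n j \<le> Sv n j'"
  by (induction j' ) (auto simp: le_Suc_eq)

lemma idx_lt: "j \<le> i \<Longrightarrow> i < n \<Longrightarrow> vech_idx n i j < Sv n (Suc j)"
  by (simp add: vech_idx_Sv)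

lemma idx_ge: "j \<le> i \<Longrightarrow> i < n \<Longrightarrow> Sv n j \<le> vech_idx n i j"
  by (simp add: vech_idx_Sv)

lemma idx_range: "j \<le> i \<Longrightarrow> i < n \<Longrightarrow> vech_idx n i j < ntil n"
  using idx_lt[of j i n] Sv_mono[of "Suc j" n n] unfolding ntil_Sv by auto

lemma idx_inj:
  assumes "j \<le> i" "i < n" "j' \<le> i'" "i' < n" "vech_idx n i j = vech_idx n i' j'"
  shows "i = i' \<and> j = j'"
proof -
  have "\<not> j < j'"
  proof
    assume "j < j'"
    then have "vech_idx n i j < Sv n j'" using idx_lt[OF assms(1,2)] Sv_mono[of "Suc j" j' n] by auto
    with idx_ge[OF assms(3,4)] assms(5) show False by auto
  qed
  moreover have "\<not> j' < j"
  proof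
    assume "j' < j"
    then have "vech_idx n i' j' < Sv n j" using idx_lt[OF assms(3,4)] Sv_mono[of "Suc j'" j n] by auto
    with idx_ge[OF assms(1,2)] assms(5) show False by auto
  qed
  ultimately have "j = j'" by auto
  with assms show ?thesis by (simp add: vech_idx_Sv)
qed

lemma idx_surj_aux: "k \<le> n \<Longrightarrow> q < Sv n k \<Longrightarrow> \<exists>j<k. Sv n j \<le> q \<and> q < Sv n (Suc j)"
proof (induction k)
  case 0 then show ?case by simp
next
  case (Suc k)
  show ?case
  proof (cases "q < Sv n k")
    case True
    then obtain j where "j < k" "Sv n j \<le> q" "q < Sv n (Suc j)" using Suc.IH Suc.prems by auto
    then show ?thesis by (intro exI[of _ j]) auto
  next
    case False then show ?thesis using Suc.prems by auto
  qed
qed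

lemma idx_surj: "q < ntil n \<Longrightarrow> \<exists>i j. j \<le> i \<and> i < n \<and> q = vech_idx n i j"
proof -
  assume "q < ntil n"
  then obtain j where j: "j < n" "Sv n j \<le> q" "q < Sv n (Suc j)"
    using idx_surj_aux[of n n q] unfolding ntil_Sv by auto
  define i where "i = j + (q - Sv n j)"
  have "j \<le> i" "i < n" using j by (auto simp: i_def)
  moreover have "q = vech_idx n i j" using j \<open>j \<le> i\<close> \<open>i < n\<close> by (simp add: vech_idx_Sv i_def)
  ultimately show ?thesis by blast
qed

definition uv :: "nat \<Rightarrow> nat \<Rightarrow> nat \<times> nat" where
  "uv n q = (SOME ij. snd ij \<le> fst ij \<and> fst ij < n \<and> q = vech_idx n (fst ij) (snd ij))"

definition vech :: "nat \<Rightarrow> (nat \<Rightarrow> nat \<Rightarrow> real) \<Rightarrow> nat \<Rightarrow> real" where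
  "vech n Y q = Y (fst (uv n q)) (snd (uv n q))"

lemma vech_at: "b \<le> a \<Longrightarrow> a < n \<Longrightarrow> vech n Y (vech_idx n a b) = Y a b"
proof -
  assume ab: "b \<le> a" "a < n"
  let ?P = "\<lambda>ij. snd ij \<le> fst ij \<and> fst ij < n \<and> vech_idx n a b = vech_idx n (fst ij) (snd ij)"
  have "?P (a,b)" using ab by simp
  then have "?P (uv n (vech_idx n a b))" unfolding uv_def by (rule someI)
  then have "uv n (vech_idx n a b) = (a,b)" using idx_inj[OF ab] by (metis prod.collapse)
  then show ?thesis by (simp add: vech_def)
qed

lemma Dm_val: "0 < n \<Longrightarrow> r < n^2 \<Longrightarrow> Dm n r q = (if q = vech_idx n (max (r mod n) (r div n)) (min (r mod n) (r div n)) then 1 else 0)"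
proof -
  assume n: "0 < n" and r: "r < n^2"
  have rd: "r div n < n" using r by (simp add: power2_eq_square less_mult_imp_div_less)
  have e: "(\<exists>i j. i < n \<and> j < n \<and> r = j * n + i \<and> q = vech_idx n (max i j) (min i j))
      \<longleftrightarrow> q = vech_idx n (max (r mod n) (r div n)) (min (r mod n) (r div n))"
  proof
    assume "\<exists>i j. i < n \<and> j < n \<and> r = j * n + i \<and> q = vech_idx n (max i j) (min i j)"
    then obtain i j where "i < n" "j < n" "r = j * n + i" "q = vech_idx n (max i j) (min i j)" by blast
    then show "q = vech_idx n (max (r mod n) (r div n)) (min (r mod n) (r div n))" by simp
  next
    assume "q = vech_idx n (max (r mod n) (r div n)) (min (r mod n) (r div n))"
    then show "\<exists>i j. i < n \<and> j < n \<and> r = j * n + i \<and> q = vech_idx n (max i j) (min i j)"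
      using n rd by (intro exI[of _ "r mod n"] exI[of _ "r div n"]) (auto simp: mult.commute)
  qed
  show ?thesis unfolding Dm_def e ..
qed

lemma Ee_val:
  assumes "b \<le> a" "a < n"
  shows "Ee n (vech_idx n a b) c = (if c = b*n + a then 1 else 0)"
proof -
  have "(\<exists>i j. i < n \<and> j \<le> i \<and> vech_idx n a b = vech_idx n i j \<and> c = j * n + i) \<longleftrightarrow> c = b*n + a"
    using idx_inj[OF assms] assms by (auto simp del: vech_idx_def)
  then show ?thesis unfolding Ee_def by simp
qed

lemma Ccal_act:
  assumes n: "0 < n" and z: "\<And>a b. b \<le> a \<Longrightarrow> a < n \<Longrightarrow> z (vech_idx n a b) = Y a b"
    and Ysym: "\<And>a b. a < n \<Longrightarrow> b < n \<Longrightarrow> Y a b = Y b a"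
    and ab: "b \<le> a" "a < n"
  shows "(\<Sum>q<ntil n. Ccal n G (vech_idx n a b) q * z q) = (\<Sum>i<n. \<Sum>j<n. G (a + b*n) (i + j*n) * Y i j)"
proof -
  let ?p = "vech_idx n a b"
  have bn: "b*n + a < n^2"
  proof -
    have "b*n + a < (b+1)*n" using ab by simp
    also have "\<dots> \<le> n*n" using ab by (intro mult_right_mono) auto
    finally show ?thesis by (simp add: power2_eq_square)
  qed
  have E: "(\<Sum>c<n^2. Ee n ?p c * G c r) = G (b*n + a) r" for r
  proof -
    have "\<And>c. Ee n ?p c * G c r = (if c = b*n+a then G c r else 0)" by (simp add: Ee_val[OF ab])
    then show ?thesis using bn by simp
  qed
  have Dz: "(\<Sum>q<ntil n. Dm n r q * z q) = Y (r mod n) (r div n)" if r: "r < n^2" for r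
  proof -
    have rd: "r div n < n" using r by (simp add: power2_eq_square less_mult_imp_div_less)
    have rm: "r mod n < n" using n by simp
    let ?q = "vech_idx n (max (r mod n) (r div n)) (min (r mod n) (r div n))"
    have "?q < ntil n" using rd rm by (intro idx_range) auto
    then have "(\<Sum>q<ntil n. Dm n r q * z q) = z ?q"
    proof -
      have "\<And>q. Dm n r q * z q = (if q = ?q then z q else 0)" by (simp add: Dm_val[OF n r])
      then show ?thesis using \<open>?q < ntil n\<close> by simp
    qed
    also have "\<dots> = Y (max (r mod n) (r div n)) (min (r mod n) (r div n))"
      using rd rm by (intro z) auto
    also have "\<dots> = Y (r mod n) (r div n)"
      using rd rm Ysym by (cases "r div n \<le> r mod n") (auto simp: max_def min_def)
    finally show ?thesis .
  qed
  have "(\<Sum>q<ntil n. Ccal n G ?p q * z q) = (\<Sum>q<ntil n. \<Sum>r<n^2. (\<Sum>c<n^2. Ee n ?p c * G c r) * Dm n r q * z q)"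
    unfolding Ccal_def mmul_def by (simp add: sum_distrib_right)
  also have "\<dots> = (\<Sum>r<n^2. G (b*n + a) r * (\<Sum>q<ntil n. Dm n r q * z q))"
    by (subst sum.swap) (simp add: E sum_distrib_left mult.assoc)
  also have "\<dots> = (\<Sum>r<n*n. G (b*n + a) r * Y (r mod n) (r div n))"
    by (simp add: Dz power2_eq_square)
  also have "\<dots> = (\<Sum>j<n. \<Sum>i<n. G (b*n + a) (j*n + i) * Y ((j*n + i) mod n) ((j*n + i) div n))"
    by (rule sum_split_nat)
  also have "\<dots> = (\<Sum>j<n. \<Sum>i<n. G (a + b*n) (i + j*n) * Y i j)"
    by (intro sum.cong refl) (simp add: add.commute)
  also have "\<dots> = (\<Sum>i<n. \<Sum>j<n. G (a + b*n) (i + j*n) * Y i j)"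
    by (rule sum.swap)
  finally show ?thesis .
qed

context sysctx begin

definition Xm :: "(nat \<Rightarrow> real) \<Rightarrow> nat \<Rightarrow> nat \<Rightarrow> nat \<Rightarrow> real" where
  "Xm x0 t a b = (\<integral>w. xtraj n m K x0 w t a * xtraj n m K x0 w t b \<partial>P t)"

lemma Xm_int: "a < n \<Longrightarrow> b < n \<Longrightarrow> integrable (P t) (\<lambda>w. xtraj n m K x0 w t a * xtraj n m K x0 w t b)"
  using X_int_rec by auto

lemma Xm_sym: "Xm x0 t a b = Xm x0 t b a"
  unfolding Xm_def by (simp add: mult.commute)

lemma Xm_nonneg: "0 \<le> Xm x0 t a a"
  unfolding Xm_def by (intro integral_nonneg_AE) auto

lemma cond_eq: "cond_sq_moment n m K p ths x0 t = ennreal (\<Sum>a<n. Xm x0 t a a)"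
proof -
  have I: "integrable (P t) (\<lambda>w. \<Sum>a<n. xtraj n m K x0 w t a * xtraj n m K x0 w t a)"
    by (intro Bochner_Integration.integrable_sum Xm_int) auto
  have "cond_sq_moment n m K p ths x0 t = (\<integral>\<^sup>+ w. ennreal (\<Sum>a<n. xtraj n m K x0 w t a * xtraj n m K x0 w t a) \<partial>P t)"
    unfolding cond_sq_moment_def sqnorm_def N_def[symmetric] by (simp add: power2_eq_square)
  also have "\<dots> = ennreal (\<integral>w. (\<Sum>a<n. xtraj n m K x0 w t a * xtraj n m K x0 w t a) \<partial>P t)"
    by (rule nn_integral_eq_integral[OF I]) (auto intro!: AE_I2 sum_nonneg)
  also have "\<dots> = ennreal (\<Sum>a<n. Xm x0 t a a)"
    unfolding Xm_def by (subst Bochner_Integration.integral_sum) (auto intro: Xm_int)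
  finally show ?thesis .
qed

lemma Xm_bound:
  assumes ab: "a < n" "b < n"
  shows "\<bar>Xm x0 t a b\<bar> \<le> (\<Sum>c<n. Xm x0 t c c)"
proof -
  let ?x = "\<lambda>w i. xtraj n m K x0 w t i"
  have Ia: "integrable (P t) (\<lambda>w. ?x w a * ?x w a)" and Ib: "integrable (P t) (\<lambda>w. ?x w b * ?x w b)"
    and Iab: "integrable (P t) (\<lambda>w. ?x w a * ?x w b)" using Xm_int ab by auto
  have g: "(\<integral>w. (?x w a * ?x w a + ?x w b * ?x w b) / 2 \<partial>P t) = (Xm x0 t a a + Xm x0 t b b) / 2"
    unfolding Xm_def using Ia Ib by (simp add: Bochner_Integration.integral_add)
  have Ig: "integrable (P t) (\<lambda>w. (?x w a * ?x w a + ?x w b * ?x w b) / 2)"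
    using Ia Ib by simp
  have le1: "Xm x0 t a b \<le> (Xm x0 t a a + Xm x0 t b b) / 2"
    unfolding g[symmetric] unfolding Xm_def
  proof (rule integral_mono[OF Iab Ig])
    fix w show "?x w a * ?x w b \<le> (?x w a * ?x w a + ?x w b * ?x w b) / 2"
      using sum_squares_bound[of "?x w a" "?x w b"] by (simp add: power2_eq_square)
  qed
  have le2: "- Xm x0 t a b \<le> (Xm x0 t a a + Xm x0 t b b) / 2"
  proof -
    have "(\<integral>w. - (?x w a * ?x w b) \<partial>P t) \<le> (\<integral>w. (?x w a * ?x w a + ?x w b * ?x w b) / 2 \<partial>P t)"
    proof (rule integral_mono)
      fix w show "- (?x w a * ?x w b) \<le> (?x w a * ?x w a + ?x w b * ?x w b) / 2"
        using sum_squares_bound[of "?x w a" "- ?x w b"] by (simp add: power2_eq_square)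
    qed (use Iab Ig in auto)
    then show ?thesis unfolding g Xm_def by simp
  qed
  have "(Xm x0 t a a + Xm x0 t b b) / 2 \<le> (\<Sum>c<n. Xm x0 t c c)"
  proof -
    have "Xm x0 t a a \<le> (\<Sum>c<n. Xm x0 t c c)" "Xm x0 t b b \<le> (\<Sum>c<n. Xm x0 t c c)"
      using ab by (auto intro!: member_le_sum Xm_nonneg)
    then show ?thesis by simp
  qed
  with le1 le2 show ?thesis by simp
qed

lemma exp_vech:
  assumes z0: "\<And>a b. b \<le> a \<Longrightarrow> a < n \<Longrightarrow> z0 (vech_idx n a b) = x0 a * x0 b"
  shows "b \<le> a \<Longrightarrow> a < n \<Longrightarrow> exp_traj n m Nk M K z0 (\<lambda>s. \<phi> (ths s)) t (vech_idx n a b) = Xm x0 t a b"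
proof (induction t arbitrary: a b)
  case 0
  interpret prob_space "P 0" by (rule P_prob)
  show ?case using z0[OF 0] prob_space.prob_space[OF P_prob, of 0] by (simp add: Xm_def)
next
  case (Suc t)
  have "exp_traj n m Nk M K z0 (\<lambda>s. \<phi> (ths s)) (Suc t) (vech_idx n a b)
      = (\<Sum>q<ntil n. Ccal n (Fth n m Nk M (\<phi> (ths t)) K) (vech_idx n a b) q * exp_traj n m Nk M K z0 (\<lambda>s. \<phi> (ths s)) t q)"
    by simp
  also have "\<dots> = (\<Sum>i<n. \<Sum>j<n. Fth n m Nk M (\<phi> (ths t)) K (a + b*n) (i + j*n) * Xm x0 t i j)"
    by (rule Ccal_act[OF npos _ _ Suc.prems]) (auto intro: Suc.IH Xm_sym)
  also have "\<dots> = Xm x0 (Suc t) a b"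
    unfolding Xm_def using Suc.prems by (subst X_rec) auto
  finally show ?case .
qed

end

lemma et_add: "exp_traj n m N M K (\<lambda>q. z1 q + z2 q) th t q = exp_traj n m N M K z1 th t q + exp_traj n m N M K z2 th t q"
  by (induction t arbitrary: q) (simp_all add: distrib_left sum.distrib)

lemma et_scale: "exp_traj n m N M K (\<lambda>q. c * z q) th t q = c * exp_traj n m N M K z th t q"
  by (induction t arbitrary: q) (simp_all add: sum_distrib_left mult_ac)

lemma et_lin3: "exp_traj n m N M K (\<lambda>q. z1 q + c2 * z2 q + c3 * z3 q) th t q
   = exp_traj n m N M K z1 th t q + c2 * exp_traj n m N M K z2 th t q + c3 * exp_traj n m N M K z3 th t q"
  by (induction t arbitrary: q) (simp_all add: distrib_left sum.distrib sum_distrib_left mult_ac)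

lemma et_zero: "exp_traj n m N M K (\<lambda>q. 0) th t q = 0"
  by (induction t arbitrary: q) simp_all

lemma et_sum: "finite F \<Longrightarrow> exp_traj n m N M K (\<lambda>q. \<Sum>k\<in>F. c k * zz k q) th t q = (\<Sum>k\<in>F. c k * exp_traj n m N M K (zz k) th t q)"
proof (induction F rule: finite_induct)
  case empty then show ?case by (simp add: et_zero)
next
  case (insert k F)
  have "exp_traj n m N M K (\<lambda>q. \<Sum>k\<in>insert k F. c k * zz k q) th t q
     = exp_traj n m N M K (\<lambda>q. c k * zz k q + (\<Sum>k\<in>F. c k * zz k q)) th t q"
    using insert by simp
  also have "\<dots> = c k * exp_traj n m N M K (zz k) th t q + (\<Sum>k\<in>F. c k * exp_traj n m N M K (zz k) th t q)"
    by (simp add: et_add et_scale insert.IH)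
  finally show ?case using insert by simp
qed

lemma et_loc: "(\<And>q. q < ntil n \<Longrightarrow> z q = z' q) \<Longrightarrow> q < ntil n \<Longrightarrow>
    exp_traj n m N M K z th t q = exp_traj n m N M K z' th t q"
proof (induction t arbitrary: q)
  case 0 then show ?case by simp
next
  case (Suc t) then show ?case by (auto intro!: sum.cong)
qed

lemma lim_sqnorm:
  fixes f :: "nat \<Rightarrow> nat \<Rightarrow> real"
  shows "(\<lambda>t. sqrt (sqnorm d (f t))) \<longlonglongrightarrow> 0 \<longleftrightarrow> (\<forall>q<d. (\<lambda>t. f t q) \<longlonglongrightarrow> 0)"
proof
  assume L: "(\<lambda>t. sqrt (sqnorm d (f t))) \<longlonglongrightarrow> 0"
  show "\<forall>q<d. (\<lambda>t. f t q) \<longlonglongrightarrow> 0"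
  proof (intro allI impI)
    fix q assume q: "q < d"
    show "(\<lambda>t. f t q) \<longlonglongrightarrow> 0"
    proof (rule Lim_null_comparison[OF _ L])
      show "\<forall>\<^sub>F t in sequentially. norm (f t q) \<le> sqrt (sqnorm d (f t))"
      proof (intro always_eventually allI)
        fix t
        have "(f t q)\<^sup>2 \<le> sqnorm d (f t)"
          unfolding sqnorm_def using q by (intro member_le_sum) auto
        then have "sqrt ((f t q)\<^sup>2) \<le> sqrt (sqnorm d (f t))" by (rule real_sqrt_le_mono)
        then show "norm (f t q) \<le> sqrt (sqnorm d (f t))" by simp
      qed
    qed
  qed
next
  assume R: "\<forall>q<d. (\<lambda>t. f t q) \<longlonglongrightarrow> 0"
  have "(\<lambda>t. sqnorm d (f t)) \<longlonglongrightarrow> (\<Sum>q<d. 0\<^sup>2)"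
    unfolding sqnorm_def using R by (intro tendsto_sum tendsto_power) auto
  then have "(\<lambda>t. sqrt (sqnorm d (f t))) \<longlonglongrightarrow> sqrt (\<Sum>q<d. (0::real)\<^sup>2)"
    by (rule tendsto_real_sqrt)
  then show "(\<lambda>t. sqrt (sqnorm d (f t))) \<longlonglongrightarrow> 0" by simp
qed

theorem theorem2:
  fixes n m N :: nat
    and S :: "(real^'d) set"
    and p :: "real^'d \<Rightarrow> (nat \<Rightarrow> real) \<Rightarrow> real"
    and \<phi> :: "real^'d \<Rightarrow> nat \<Rightarrow> real"
    and M :: "nat \<Rightarrow> nat \<Rightarrow> nat \<Rightarrow> real"
    and K :: "nat \<Rightarrow> nat \<Rightarrow> real"
    and ti :: bool
  assumes "0 < n" and "0 < m" and "0 < N"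
    and dens: "\<forall>\<theta>\<in>S. p \<theta> \<in> borel_measurable (lebN (n * (n + m)))
               \<and> (\<forall>v\<in>space (lebN (n * (n + m))). 0 \<le> p \<theta> v)
               \<and> (\<integral>\<^sup>+ v. ennreal (p \<theta> v) \<partial>lebN (n * (n + m))) = 1"
    and simplex: "\<forall>\<theta>\<in>S. (\<forall>k<N. 0 \<le> \<phi> \<theta> k) \<and> (\<Sum>k<N. \<phi> \<theta> k) = 1"
    and symM: "\<forall>k<N. \<forall>i<n * (n + m). \<forall>j<n * (n + m). M k i j = M k j i"
    and smp: "\<forall>\<theta>\<in>S. \<forall>i<n * (n + m). \<forall>j<n * (n + m).
               integrable (vlaw (n * (n + m)) p \<theta>) (\<lambda>v. v i * v j)
               \<and> (\<integral>v. v i * v j \<partial>vlaw (n * (n + m)) p \<theta>) = (\<Sum>k<N. \<phi> \<theta> k * M k i j)"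
  shows "robust_ms_stable n m K p S ti \<longleftrightarrow> robustly_stable_exp n m N M K (\<phi> ` S) ti"
proof -
  have ctx: "sysctx (n*(n+m)) p ths n m N M \<phi>" if thsS: "\<And>s. ths s \<in> S" for ths
    unfolding sysctx_def trajctx_def sysctx_axioms_def
    using dens smp thsS \<open>0 < n\<close> by blast
  show ?thesis
  proof
    assume RMS: "robust_ms_stable n m K p S ti"
    show "robustly_stable_exp n m N M K (\<phi> ` S) ti"
      unfolding robustly_stable_exp_def
    proof (intro allI impI)
      fix xt0 ths' assume adm': "adm ti (\<phi> ` S) ths'"
      define ths where "ths s = (SOME \<theta>. \<theta> \<in> S \<and> \<phi> \<theta> = ths' s)" for s
      have thsS: "ths s \<in> S \<and> \<phi> (ths s) = ths' s" for s
      proof -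
        have "ths' s \<in> \<phi> ` S" using adm' unfolding adm_def by auto
        then have "\<exists>\<theta>. \<theta> \<in> S \<and> \<phi> \<theta> = ths' s" by auto
        then show ?thesis unfolding ths_def by (rule someI_ex)
      qed
      have adm: "adm ti S ths"
        unfolding adm_def
      proof (intro conjI allI impI)
        fix t show "ths t \<in> S" using thsS by blast
      next
        fix t assume ti
        then have "ths' t = ths' 0" using adm' unfolding adm_def by blast
        then show "ths t = ths 0" unfolding ths_def by simp
      qed
      have ths'eq: "ths' = (\<lambda>s. \<phi> (ths s))" using thsS by auto
      interpret sysctx "n*(n+m)" p ths n m K N M \<phi>
        by (rule ctx) (use thsS in auto)
      have Xlim: "(\<lambda>t. Xm x t a b) \<longlonglongrightarrow> 0" if ab: "a < n" "b < n" for x a b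
      proof -
        have "cond_sq_moment n m K p ths x \<longlonglongrightarrow> 0" using RMS adm unfolding robust_ms_stable_def by auto
        then have "(\<lambda>t. ennreal (\<Sum>c<n. Xm x t c c)) \<longlonglongrightarrow> ennreal 0"
          by (simp add: cond_eq[abs_def])
        then have tr: "(\<lambda>t. \<Sum>c<n. Xm x t c c) \<longlonglongrightarrow> 0"
          by (subst (asm) tendsto_ennreal_iff) (auto intro!: always_eventually sum_nonneg Xm_nonneg)
        show ?thesis
        proof (rule Lim_null_comparison[OF _ tr])
          show "\<forall>\<^sub>F t in sequentially. norm (Xm x t a b) \<le> (\<Sum>c<n. Xm x t c c)"
            using Xm_bound[OF ab] by simp
        qed
      qed
      let ?E = "\<lambda>z t q. exp_traj n m N M K z ths' t q"
      let ?V = "\<lambda>x. vech n (\<lambda>i j. x i * x j)"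
      have Zlim: "(\<lambda>t. ?E (?V x) t q) \<longlonglongrightarrow> 0" if q: "q < ntil n" for x q
      proof -
        obtain i j where ij: "j \<le> i" "i < n" "q = vech_idx n i j" using idx_surj[OF q] by blast
        have "?E (?V x) t q = Xm x t i j" for t
          unfolding ths'eq ij(3) by (rule exp_vech) (auto simp: vech_at ij)
        then show ?thesis using Xlim[of i j x] ij by simp
      qed
      define e where "e a = (\<lambda>i::nat. if i = a then 1 else (0::real))" for a
      have Dlim: "(\<lambda>t. ?E (\<lambda>q. if q = q' then 1 else 0) t q) \<longlonglongrightarrow> 0" if q': "q' < ntil n" and q: "q < ntil n" for q' q
      proof -
        obtain a b where ab: "b \<le> a" "a < n" "q' = vech_idx n a b" using idx_surj[OF q'] by blast
        show ?thesis
        proof (cases "a = b")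
          case True
          have eq: "(if q'' = q' then 1 else 0) = ?V (e a) q''" if qq: "q'' < ntil n" for q''
          proof -
            obtain a' b' where ab': "b' \<le> a'" "a' < n" "q'' = vech_idx n a' b'" using idx_surj[OF qq] by blast
            show ?thesis using idx_inj[OF ab'(1,2) ab(1,2)] ab ab' True by (auto simp: vech_at e_def)
          qed
          have "?E (\<lambda>q. if q = q' then 1 else 0) t q = ?E (?V (e a)) t q" for t
            by (rule et_loc[OF eq q])
          then show ?thesis using Zlim[OF q, of "e a"] by simp
        next
          case False
          then have ba: "b < a" using ab by simp
          let ?u = "\<lambda>i. e a i + e b i"
          have eq: "(if q'' = q' then 1 else 0) = ?V ?u q'' + (-1) * ?V (e a) q'' + (-1) * ?V (e b) q''"
            if qq: "q'' < ntil n" for q''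
          proof -
            obtain a' b' where ab': "b' \<le> a'" "a' < n" "q'' = vech_idx n a' b'" using idx_surj[OF qq] by blast
            show ?thesis using idx_inj[OF ab'(1,2) ab(1,2)] ab ab' ba by (auto simp: vech_at e_def)
          qed
          have "?E (\<lambda>q. if q = q' then 1 else 0) t q = ?E (?V ?u) t q + (-1) * ?E (?V (e a)) t q + (-1) * ?E (?V (e b)) t q" for t
            apply (subst et_loc[OF eq q]) apply assumption apply (rule et_lin3) done
          then show ?thesis
            using tendsto_diff[OF tendsto_diff[OF Zlim[OF q, of ?u] Zlim[OF q, of "e a"]] Zlim[OF q, of "e b"]]
            by simp
        qed
      qed
      have "\<forall>q<ntil n. (\<lambda>t. ?E xt0 t q) \<longlonglongrightarrow> 0"
      proof (intro allI impI)
        fix q assume q: "q < ntil n"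
        have eq: "xt0 q'' = (\<Sum>q'<ntil n. xt0 q' * (if q'' = q' then 1 else 0))" if qq: "q'' < ntil n" for q''
        proof -
          have "(\<Sum>q'<ntil n. xt0 q' * (if q'' = q' then 1 else 0)) = (\<Sum>q'<ntil n. if q'' = q' then xt0 q'' else 0)"
            by (intro sum.cong) auto
          then show ?thesis using qq by simp
        qed
        have "?E xt0 t q = (\<Sum>q'<ntil n. xt0 q' * ?E (\<lambda>q. if q = q' then 1 else 0) t q)" for t
          by (subst et_loc[OF eq q]) (simp_all add: et_sum)
        then show "(\<lambda>t. ?E xt0 t q) \<longlonglongrightarrow> 0"
          using tendsto_sum[of "{..<ntil n}" "\<lambda>q' t. xt0 q' * ?E (\<lambda>q. if q = q' then 1 else 0) t q" "\<lambda>_. 0" sequentially]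
            Dlim q by (simp add: tendsto_mult_right_zero)
      qed
      then show "(\<lambda>t. sqrt (sqnorm (ntil n) (?E xt0 t))) \<longlonglongrightarrow> 0"
        by (simp add: lim_sqnorm)
    qed
  next
    assume RSE: "robustly_stable_exp n m N M K (\<phi> ` S) ti"
    show "robust_ms_stable n m K p S ti"
      unfolding robust_ms_stable_def
    proof (intro allI impI)
      fix x0 ths assume adm: "adm ti S ths"
      interpret sysctx "n*(n+m)" p ths n m K N M \<phi>
        by (rule ctx) (use adm in \<open>auto simp: adm_def\<close>)
      let ?z0 = "vech n (\<lambda>i j. x0 i * x0 j)"
      have adm': "adm ti (\<phi> ` S) (\<lambda>s. \<phi> (ths s))" using adm unfolding adm_def by (metis image_eqI)
      have "(\<lambda>t. sqrt (sqnorm (ntil n) (exp_traj n m N M K ?z0 (\<lambda>s. \<phi> (ths s)) t))) \<longlonglongrightarrow> 0"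
        using RSE adm' unfolding robustly_stable_exp_def by blast
      then have C: "\<forall>q<ntil n. (\<lambda>t. exp_traj n m N M K ?z0 (\<lambda>s. \<phi> (ths s)) t q) \<longlonglongrightarrow> 0"
        by (simp add: lim_sqnorm)
      have "(\<lambda>t. Xm x0 t a a) \<longlonglongrightarrow> 0" if a: "a < n" for a
      proof -
        have "exp_traj n m N M K ?z0 (\<lambda>s. \<phi> (ths s)) t (vech_idx n a a) = Xm x0 t a a" for t
          by (rule exp_vech) (auto simp: vech_at a)
        then show ?thesis using C idx_range[of a a n] a by auto
      qed
      then have "(\<lambda>t. \<Sum>a<n. Xm x0 t a a) \<longlonglongrightarrow> (\<Sum>a<n. 0)"
        by (intro tendsto_sum) auto
      then have "(\<lambda>t. ennreal (\<Sum>a<n. Xm x0 t a a)) \<longlonglongrightarrow> ennreal 0"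
        by (intro tendsto_ennrealI) simp
      then show "cond_sq_moment n m K p ths x0 \<longlonglongrightarrow> 0"
        by (simp add: cond_eq[abs_def])
    qed
  qed
qed

end
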